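(* Consider the online multiple testing protocol described in the context, and a deterministic online testing algorithm with worst-case threshold sequence $(\tilde\lambda_t)_{t\ge1}$ satisfying $\sum_{t=1}^\infty\tilde\lambda_t\le C<1$. Assume $G(x)\le Lx$ for all $x\in[0,1]$ for some constant $L\ge1$. For an even integer $T\ge2$, let the environment be the deterministic two-phase sequence $Y_t=0$ for $1\le t\le T/2$ and $Y_t=1$ for $T/2<t\le T$. Then for all sufficiently large $T$ and all $a,b>0$, $$\mathbb{E}[\mathrm{Regret}_T(a,b)]\ \ge\ b\cdot\frac T2\left[(1-C)\prod_{t=T/2+1}^{\infty}\big(1-L\tilde\lambda_t\big)_+\right]=\Omega(T),$$ where $(x)_+=\max(x,0)$.
   Context: Online multiple testing protocol: at each round $t$ the environment has a true state $Y_t\in\{0,1\}$ and reveals a $p$-value $p_t\in[0,1]$; conditionally on the states and the past, $p_t\sim\mathrm{Uniform}[0,1]$ if $Y_t=0$ and $p_t\sim G$ if $Y_t=1$, independently across rounds, where $G$ is a continuous strictly increasing CDF on $[0,1]$ with $G(0)=0$, $G(1)=1$. The algorithm picks a threshold $\lambda_t\in[0,1]$ that is a deterministic function of the past history $(p_s,\lambda_s,\delta_s)_{s\le t-1}$ and decides $\delta_t=\mathbf{1}\{p_t\le\lambda_t\}$. The worst-case threshold sequence $\tilde\lambda_t$ is the threshold the algorithm uses at round $t$ when exactly zero rejections have occurred in rounds $1,\dots,t-1$ (so as long as no rejection has been made, $\lambda_t=\tilde\lambda_t$). $V_T=\sum_{t\le T}\mathbf{1}\{Y_t=0,\delta_t=1\}$,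 $M_T=\sum_{t\le T}\mathbf{1}\{Y_t=1,\delta_t=0\}$, and for $a,b>0$, $\mathrm{Regret}_T(a,b)=aV_T+bM_T$. *)

theory Defs
  imports "HOL-Probability.Probability"
begin

text \<open>A history entry of round s is (p_s, lambda_s, delta_s). A deterministic online
testing algorithm is a map from the past history (rounds 1..t-1, oldest first) to the
threshold lambda_t.\<close>

type_synonym history = "(real \<times> real \<times> bool) list"

fun hist :: "(history \<Rightarrow> real) \<Rightarrow> (nat \<Rightarrow> real) \<Rightarrow> nat \<Rightarrow> history" where
  "hist A p 0 = []"
| "hist A p (Suc n) =
     (let h = hist A p n; l = A h in h @ [(p (Suc n), l, p (Suc n) \<le> l)])"

definition thr :: "(history \<Rightarrow> real) \<Rightarrow> (nat \<Rightarrow> real) \<Rightarrow> nat \<Rightarrow> real" where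
  "thr A p t = A (hist A p (t - 1))"

definition rej :: "(history \<Rightarrow> real) \<Rightarrow> (nat \<Rightarrow> real) \<Rightarrow> nat \<Rightarrow> bool" where
  "rej A p t = (p t \<le> thr A p t)"

definition V :: "(history \<Rightarrow> real) \<Rightarrow> (nat \<Rightarrow> bool) \<Rightarrow> nat \<Rightarrow> (nat \<Rightarrow> real) \<Rightarrow> nat" where
  "V A Y T p = card {t \<in> {1..T}. \<not> Y t \<and> rej A p t}"

definition M :: "(history \<Rightarrow> real) \<Rightarrow> (nat \<Rightarrow> bool) \<Rightarrow> nat \<Rightarrow> (nat \<Rightarrow> real) \<Rightarrow> nat" where
  "M A Y T p = card {t \<in> {1..T}. Y t \<and> \<not> rej A p t}"

definition regret :: "real \<Rightarrow> real \<Rightarrow> (history \<Rightarrow> real) \<Rightarrow> (nat \<Rightarrow> bool) \<Rightarrow> nat \<Rightarrow> (nat \<Rightarrow> real) \<Rightarrow> real" where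
  "regret a b A Y T p = a * real (V A Y T p) + b * real (M A Y T p)"

definition alt_dist :: "(real \<Rightarrow> real) \<Rightarrow> real measure" where
  "alt_dist G = interval_measure (\<lambda>x. G (min 1 (max 0 x)))"

definition pdist :: "(real \<Rightarrow> real) \<Rightarrow> bool \<Rightarrow> real measure" where
  "pdist G y = (if y then alt_dist G else uniform_measure lborel {0..1})"

definition pspace :: "(real \<Rightarrow> real) \<Rightarrow> (nat \<Rightarrow> bool) \<Rightarrow> nat \<Rightarrow> (nat \<Rightarrow> real) measure" where
  "pspace G Y T = PiM {1..T} (\<lambda>t. pdist G (Y t))"

definition exp_regret :: "real \<Rightarrow> real \<Rightarrow> (history \<Rightarrow> real) \<Rightarrow> (real \<Rightarrow> real) \<Rightarrow> (nat \<Rightarrow> bool) \<Rightarrow> nat \<Rightarrow> ennreal" where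
  "exp_regret a b A G Y T = (\<integral>\<^sup>+ p. ennreal (regret a b A Y T p) \<partial>pspace G Y T)"

definition two_phase :: "nat \<Rightarrow> nat \<Rightarrow> bool" where
  "two_phase T t = (T div 2 < t)"

end

theory Submission
  imports Defs
begin

lemma clampG_mono:
  fixes G :: "real \<Rightarrow> real"
  assumes "strict_mono_on {0..1} G" "x \<le> y"
  shows "G (min 1 (max 0 x)) \<le> G (min 1 (max 0 y))"
  by (rule strict_mono_on_leD[OF assms(1)]) (use assms(2) in auto)

lemma clampG_cont:
  fixes G :: "real \<Rightarrow> real"
  assumes "continuous_on {0..1} G"
  shows "continuous (at_right a) (\<lambda>x. G (min 1 (max 0 x)))"
proof -
  have "continuous_on UNIV (\<lambda>x. G (min 1 (max 0 x)))"
    by (rule continuous_on_compose2[OF assms]) (auto intro!: continuous_intros)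
  then show ?thesis
    by (simp add: continuous_at_imp_continuous_at_within continuous_on_eq_continuous_at)
qed

lemma sigma_finite_pdist:
  assumes "continuous_on {0..1} G" "strict_mono_on {0..1} G"
  shows "sigma_finite_measure (pdist G y)"
proof (cases y)
  case True
  then show ?thesis unfolding pdist_def alt_dist_def
    using sigma_finite_interval_measure[OF clampG_mono[OF assms(2)] clampG_cont[OF assms(1)]]
    by simp
next
  case False
  have "prob_space (uniform_measure lborel {0..1::real})"
    by (intro prob_space_uniform_measure) auto
  then show ?thesis using False unfolding pdist_def
    by (simp add: prob_space_imp_sigma_finite)
qed

lemma sets_pdist[simp]: "sets (pdist G y) = sets borel"
  unfolding pdist_def alt_dist_def by auto

lemma unif_bound:
  fixes x :: real
  assumes "0 \<le> x" "x \<le> 1"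
  shows "emeasure (uniform_measure lborel {0..1}) {x<..} = ennreal (1 - x)"
proof -
  have "{0..1} \<inter> {x<..} = {x<..1}" using assms by auto
  then show ?thesis using assms by (simp add: divide_ennreal_def)
qed

lemma alt_bound:
  assumes "continuous_on {0..1} G" "strict_mono_on {0..1} G" "G 1 = 1"
    and "0 \<le> x" "x \<le> 1"
  shows "emeasure (alt_dist G) {x<..} \<ge> ennreal (1 - G x)"
proof -
  have "emeasure (alt_dist G) {x<..1} = ennreal (1 - G x)"
    unfolding alt_dist_def
    using emeasure_interval_measure_Ioc[OF assms(5) clampG_mono[OF assms(2)] clampG_cont[OF assms(1)]]
      assms by simp
  moreover have "emeasure (alt_dist G) {x<..1} \<le> emeasure (alt_dist G) {x<..}"
    by (rule emeasure_mono) (auto simp: alt_dist_def)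
  ultimately show ?thesis by simp
qed

lemma prod_one_minus_ge:
  fixes x :: "'a \<Rightarrow> real"
  assumes "finite I" "\<And>i. i \<in> I \<Longrightarrow> 0 \<le> x i \<and> x i \<le> 1"
  shows "(\<Prod>i\<in>I. 1 - x i) \<ge> 1 - (\<Sum>i\<in>I. x i)"
  using assms
proof (induction I rule: finite_induct)
  case empty then show ?case by simp
next
  case (insert a I)
  have S: "0 \<le> (\<Sum>i\<in>I. x i)" using insert by (intro sum_nonneg) auto
  have xa: "0 \<le> x a" "x a \<le> 1" using insert by auto
  have IH: "(\<Prod>i\<in>I. 1 - x i) \<ge> 1 - (\<Sum>i\<in>I. x i)" using insert by auto
  have "(1 - x a) * (1 - (\<Sum>i\<in>I. x i)) \<le> (1 - x a) * (\<Prod>i\<in>I. 1 - x i)"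
    using IH xa by (intro mult_left_mono) auto
  moreover have "1 - (x a + (\<Sum>i\<in>I. x i)) \<le> (1 - x a) * (1 - (\<Sum>i\<in>I. x i))"
    using S xa by (simp add: algebra_simps)
  ultimately show ?case using insert by simp
qed

lemma prod_tail:
  fixes x :: "nat \<Rightarrow> real"
  assumes x0: "\<And>k. 0 \<le> x k" and xs: "summable x" and xh: "suminf x \<le> 1/2"
  shows "(\<forall>k. x k \<le> 1/2) \<and> prodinf (\<lambda>k. 1 - x k) \<ge> 1/2 \<and> (\<forall>n. prodinf (\<lambda>k. 1 - x k) \<le> (\<Prod>k<n. 1 - x k))"
proof -
  have xk: "x k \<le> 1/2" for k
  proof -
    have "sum x {k} \<le> suminf x" by (rule sum_le_suminf[OF xs]) (auto simp: x0)
    then show ?thesis using xh by simp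
  qed
  have xk1: "0 \<le> 1 - x k" for k using xk[of k] by simp
  have xk2: "x k \<le> 1" for k using xk[of k] by simp
  define P where "P n = (\<Prod>k<n. 1 - x k)" for n
  have Pn0: "0 \<le> P n" for n
    unfolding P_def using xk1 by (intro prod_nonneg) auto
  have dec: "decseq P"
    unfolding decseq_Suc_iff
  proof
    fix n
    have "P (Suc n) = P n * (1 - x n)" unfolding P_def by simp
    also have "\<dots> \<le> P n" using Pn0[of n] x0[of n] by (intro mult_left_le) auto
    finally show "P (Suc n) \<le> P n" .
  qed
  have lb: "1/2 \<le> P n" for n
  proof -
    have "1 - sum x {..<n} \<le> P n" unfolding P_def
      by (intro prod_one_minus_ge) (simp_all add: x0 xk2)
    moreover have "sum x {..<n} \<le> suminf x" by (rule sum_le_suminf[OF xs]) (auto simp: x0)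
    ultimately show ?thesis using xh by linarith
  qed
  obtain L0 where L0: "P \<longlonglongrightarrow> L0" "\<forall>i. L0 \<le> P i"
    using decseq_convergent[OF dec, of "1/2"] lb by blast
  have L0h: "1/2 \<le> L0" using L0(1) lb by (intro LIMSEQ_le_const) auto
  have nz: "1 - x k \<noteq> 0" for k using xk[of k] by simp
  have L0': "(\<lambda>n. \<Prod>k\<le>n. 1 - x k) \<longlonglongrightarrow> L0"
    using L0(1) unfolding P_def by (simp add: LIMSEQ_lessThan_iff_atMost)
  have cp: "convergent_prod (\<lambda>k. 1 - x k)"
  proof -
    have "L0 \<noteq> 0" using L0h by simp
    then show ?thesis using convergent_prod_iff_nz_lim[of "\<lambda>k. 1 - x k"] nz L0' by blast
  qed
  have "prodinf (\<lambda>k. 1 - x k) = L0"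
    using LIMSEQ_unique[OF convergent_prod_LIMSEQ[OF cp] L0'] .
  then show ?thesis using L0 L0h xk unfolding P_def by auto
qed

lemma lt_range:
  assumes A_range: "\<And>h. 0 \<le> A h \<and> A h \<le> 1"
    and worst_case: "\<And>p n. (\<forall>s\<in>{1..n}. \<not> rej A p s) \<Longrightarrow> thr A p (n + 1) = lt (n + 1)"
  shows "0 \<le> lt (Suc n) \<and> lt (Suc n) \<le> 1"
proof -
  let ?p = "\<lambda>_::nat. 2::real"
  have "\<forall>s\<in>{1..n}. \<not> rej A ?p s"
    using A_range by (auto simp: rej_def thr_def) (smt (verit))
  then have "thr A ?p (n + 1) = lt (n + 1)" by (rule worst_case)
  then show ?thesis using A_range[of "hist A ?p n"] by (simp add: thr_def)
qed

lemma no_rej: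
  assumes worst_case: "\<And>p n. (\<forall>s\<in>{1..n}. \<not> rej A p s) \<Longrightarrow> thr A p (n + 1) = lt (n + 1)"
    and gt: "\<forall>t\<in>{1..T}. lt t < p t"
  shows "\<forall>s\<in>{1..T}. \<not> rej A p s"
proof -
  have "n \<le> T \<Longrightarrow> \<forall>s\<in>{1..n}. \<not> rej A p s" for n
  proof (induction n)
    case 0 then show ?case by simp
  next
    case (Suc n)
    then have IH: "\<forall>s\<in>{1..n}. \<not> rej A p s" by simp
    have "thr A p (n + 1) = lt (n + 1)" by (rule worst_case[OF IH])
    moreover have "lt (n+1) < p (n+1)" using gt Suc.prems by auto
    ultimately have "\<not> rej A p (Suc n)" by (simp add: rej_def)
    then show ?case using IH by (auto simp: le_Suc_eq)
  qed
  then show ?thesis by blast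
qed

theorem theorem2:
  fixes A :: "history \<Rightarrow> real" and lt :: "nat \<Rightarrow> real"
    and G :: "real \<Rightarrow> real" and C L :: real
  assumes A_range: "\<And>h. 0 \<le> A h \<and> A h \<le> 1"
    and worst_case: "\<And>p n. (\<forall>s\<in>{1..n}. \<not> rej A p s) \<Longrightarrow> thr A p (n + 1) = lt (n + 1)"
    and lt_summable: "summable (\<lambda>t. lt (Suc t))"
    and lt_sum: "(\<Sum>t. lt (Suc t)) \<le> C" and C_lt1: "C < 1"
    and G_cont: "continuous_on {0..1} G" and G_strict: "strict_mono_on {0..1} G"
    and G0: "G 0 = 0" and G1: "G 1 = 1"
    and G_lin: "\<And>x. x \<in> {0..1} \<Longrightarrow> G x \<le> L * x" and L_ge1: "L \<ge> 1"
  shows "\<exists>c>0. \<exists>T0. \<forall>T\<ge>T0. even T \<and> T \<ge> 2 \<longrightarrow>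
           (1 - C) * (\<Prod>t. max 0 (1 - L * lt (t + T div 2 + 1))) \<ge> c \<and>
           (\<forall>a>0. \<forall>b>0.
              exp_regret a b A G (two_phase T) T \<ge>
              ennreal (b * (real T / 2) *
                ((1 - C) * (\<Prod>t. max 0 (1 - L * lt (t + T div 2 + 1))))))"
proof -
  have lt01: "0 \<le> lt (Suc n) \<and> lt (Suc n) \<le> 1" for n
    by (rule lt_range[OF A_range worst_case])
  have lt01': "t \<ge> 1 \<Longrightarrow> 0 \<le> lt t \<and> lt t \<le> 1" for t
    using lt01[of "t - 1"] by simp
  have Lpos: "L > 0" using L_ge1 by simp
  obtain N where N: "\<forall>n\<ge>N. norm (\<Sum>i. lt (Suc (i + n))) < 1 / (2 * L)"
    using suminf_exist_split[of "1 / (2 * L)" "\<lambda>j. lt (Suc j)"] lt_summable Lpos by auto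
  have main: "(1 - C) * (\<Prod>t. max 0 (1 - L * lt (t + T div 2 + 1))) \<ge> (1 - C) / 2 \<and>
           (\<forall>a>0. \<forall>b>0.
              exp_regret a b A G (two_phase T) T \<ge>
              ennreal (b * (real T / 2) *
                ((1 - C) * (\<Prod>t. max 0 (1 - L * lt (t + T div 2 + 1))))))"
    if T: "T \<ge> 2 * N + 2" "even T" for T
  proof -
    define m where "m = T div 2"
    have Tm: "T = 2 * m" using T unfolding m_def by simp
    have mN: "m \<ge> N" using T Tm by simp
    define x where "x k = L * lt (k + m + 1)" for k
    have x0: "0 \<le> x k" for k unfolding x_def using lt01[of "k + m"] Lpos by simp
    have sm: "summable (\<lambda>i. lt (Suc (i + m)))"
      using lt_summable summable_iff_shift[of "\<lambda>j. lt (Suc j)" m] by simp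
    have xs: "summable x" unfolding x_def using summable_mult[OF sm, of L] by simp
    have "(\<Sum>i. lt (Suc (i + m))) < 1 / (2 * L)" using N mN by auto
    then have "L * (\<Sum>i. lt (Suc (i + m))) \<le> 1/2" using Lpos
      by (simp add: field_simps)
    moreover have "suminf x = L * (\<Sum>i. lt (Suc (i + m)))"
      unfolding x_def using suminf_mult[OF sm, of L] by simp
    ultimately have xh: "suminf x \<le> 1/2" by simp
    note PT = prod_tail[OF x0 xs xh]
    have gx: "(\<lambda>t. max 0 (1 - L * lt (t + T div 2 + 1))) = (\<lambda>k. 1 - x k)"
    proof
      fix k
      have "x k \<le> 1/2" using PT by blast
      then show "max 0 (1 - L * lt (k + T div 2 + 1)) = 1 - x k"
        unfolding x_def m_def by (simp add: max_def)
    qed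
    define Pi where "Pi = prodinf (\<lambda>k. 1 - x k)"
    have Pih: "1/2 \<le> Pi" "Pi \<le> (\<Prod>k<m. 1 - x k)" using PT unfolding Pi_def by auto
    have C1: "0 < 1 - C" using C_lt1 by simp
    have part1: "(1 - C) / 2 \<le> (1 - C) * Pi" using mult_left_mono[OF Pih(1), of "1 - C"] C1 by simp
    have C0: "0 \<le> C"
      using lt_sum suminf_nonneg[OF lt_summable] lt01 by (meson order_trans)
    define P1 where "P1 = (\<Prod>t\<in>{1..m}. 1 - lt t)"
    define P2 where "P2 = (\<Prod>k<m. 1 - x k)"
    have P1h: "1 - C \<le> P1"
    proof -
      have "1 - sum lt {1..m} \<le> P1" unfolding P1_def
        by (intro prod_one_minus_ge) (auto simp: lt01')
      moreover have "sum lt {1..m} = (\<Sum>j<m. lt (Suc j))"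
        by (simp add: sum.atLeast1_atMost_eq)
      moreover have "(\<Sum>j<m. lt (Suc j)) \<le> (\<Sum>t. lt (Suc t))"
        by (rule sum_le_suminf[OF lt_summable]) (auto simp: lt01)
      ultimately show ?thesis using lt_sum by linarith
    qed
    have Pi0: "0 \<le> Pi" using Pih by simp
    have key: "(1 - C) * Pi \<le> P1 * P2"
      using P1h Pih(2) C1 Pi0 unfolding P2_def by (intro mult_mono) auto
    define f where "f t = (if t \<le> m then 1 - lt t else 1 - L * lt t)" for t
    have f0: "0 \<le> f t" if "t \<in> {1..T}" for t
    proof (cases "t \<le> m")
      case True then show ?thesis using lt01'[of t] that by (simp add: f_def)
    next
      case False
      then obtain k where k: "t = k + m + 1" by (metis add.commute add_Suc_right less_imp_Suc_add not_le Suc_eq_plus1)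
      have "x k \<le> 1/2" using PT by blast
      then show ?thesis using False k by (simp add: f_def x_def)
    qed
    have prodf: "(\<Prod>t\<in>{1..T}. f t) = P1 * P2"
    proof -
      have U: "{1..T} = {1..m} \<union> {m<..T}" using Tm by auto
      have "(\<Prod>t\<in>{1..T}. f t) = (\<Prod>t\<in>{1..m}. f t) * (\<Prod>t\<in>{m<..T}. f t)"
        unfolding U by (rule prod.union_disjoint) auto
      moreover have "(\<Prod>t\<in>{1..m}. f t) = P1" unfolding P1_def f_def by (rule prod.cong) auto
      moreover have "(\<Prod>t\<in>{m<..T}. f t) = P2"
      proof -
        have img: "{m<..T} = (\<lambda>k. k + m + 1) ` {..<m}"
        proof
          show "{m<..T} \<subseteq> (\<lambda>k. k + m + 1) ` {..<m}"
          proof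
            fix t assume "t \<in> {m<..T}"
            then show "t \<in> (\<lambda>k. k + m + 1) ` {..<m}" using Tm
              by (intro rev_image_eqI[of "t - m - 1"]) auto
          qed
        qed (use Tm in auto)
        have "(\<Prod>t\<in>{m<..T}. f t) = (\<Prod>k<m. f (k + m + 1))"
          unfolding img by (subst prod.reindex) (auto simp: inj_on_def)
        also have "\<dots> = P2" unfolding P2_def f_def x_def by (rule prod.cong) auto
        finally show ?thesis .
      qed
      ultimately show ?thesis by simp
    qed
    show ?thesis
    proof (intro conjI allI impI)
      show "(1 - C) / 2 \<le> (1 - C) * (\<Prod>t. max 0 (1 - L * lt (t + T div 2 + 1)))"
        using part1 gx unfolding Pi_def by simp
    next
      fix a b :: real assume a: "a > 0" and b: "b > 0"
      define Mp where "Mp = PiM {1..T} (\<lambda>t. pdist G (two_phase T t))"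
      define E where "E = PiE {1..T} (\<lambda>t. {lt t<..})"
      interpret product_sigma_finite "\<lambda>t. pdist G (two_phase T t)"
        by (simp add: product_sigma_finite_def sigma_finite_pdist[OF G_cont G_strict])
      have Esets: "E \<in> sets Mp" unfolding E_def Mp_def
        by (rule sets_PiM_I_finite) auto
      have step1: "(\<integral>\<^sup>+ p. ennreal (b * (real T / 2)) * indicator E p \<partial>Mp)
            \<le> (\<integral>\<^sup>+ p. ennreal (regret a b A (two_phase T) T p) \<partial>Mp)"
      proof (rule nn_integral_mono)
        fix p assume "p \<in> space Mp"
        show "ennreal (b * (real T / 2)) * indicator E p \<le> ennreal (regret a b A (two_phase T) T p)"
        proof (cases "p \<in> E")
          case False then show ?thesis by simp
        next
          case True
          then have gt: "\<forall>t\<in>{1..T}. lt t < p t" unfolding E_def by auto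
          have nr: "\<forall>s\<in>{1..T}. \<not> rej A p s" by (rule no_rej[OF worst_case gt])
          have "{t \<in> {1..T}. two_phase T t \<and> \<not> rej A p t} = {m<..T}"
            using nr unfolding two_phase_def m_def by auto
          then have "M A (two_phase T) T p = T - m" unfolding M_def by simp
          then have Meq: "real (M A (two_phase T) T p) = real T / 2" using Tm by simp
          moreover have "0 \<le> a * real (V A (two_phase T) T p)" using a by simp
          ultimately have "b * (real T / 2) \<le> regret a b A (two_phase T) T p"
            unfolding regret_def Meq by linarith
          then show ?thesis using True by (simp add: ennreal_leI)
        qed
      qed
      have step2: "(\<integral>\<^sup>+ p. ennreal (b * (real T / 2)) * indicator E p \<partial>Mp)
           = ennreal (b * (real T / 2)) * emeasure Mp E"
        by (rule nn_integral_cmult_indicator[OF Esets])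
      have step3: "emeasure Mp E = (\<Prod>t\<in>{1..T}. emeasure (pdist G (two_phase T t)) {lt t<..})"
        unfolding Mp_def E_def by (rule emeasure_PiM) auto
      have step4: "(\<Prod>t\<in>{1..T}. ennreal (f t)) \<le> (\<Prod>t\<in>{1..T}. emeasure (pdist G (two_phase T t)) {lt t<..})"
      proof (rule prod_mono_ennreal)
        fix t assume t: "t \<in> {1..T}"
        have l: "0 \<le> lt t" "lt t \<le> 1" using lt01'[of t] t by auto
        show "ennreal (f t) \<le> emeasure (pdist G (two_phase T t)) {lt t<..}"
        proof (cases "t \<le> m")
          case True
          then show ?thesis using l unif_bound[OF l]
            by (simp add: f_def pdist_def two_phase_def m_def)
        next
          case False
          have "ennreal (1 - L * lt t) \<le> ennreal (1 - G (lt t))"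
            using G_lin[of "lt t"] l by (intro ennreal_leI) auto
          also have "\<dots> \<le> emeasure (alt_dist G) {lt t<..}"
            by (rule alt_bound[OF G_cont G_strict G1 l])
          finally show ?thesis using False by (simp add: f_def pdist_def two_phase_def m_def)
        qed
      qed
      have step5: "(\<Prod>t\<in>{1..T}. ennreal (f t)) = ennreal (P1 * P2)"
        using prod_ennreal[of "{1..T}" f] f0 prodf by simp
      have "ennreal (b * (real T / 2) * ((1 - C) * Pi)) \<le> ennreal (b * (real T / 2) * (P1 * P2))"
        using key b by (intro ennreal_leI mult_left_mono) auto
      also have "\<dots> = ennreal (b * (real T / 2)) * ennreal (P1 * P2)"
        using b P1h Pih C1 unfolding P2_def by (intro ennreal_mult) auto
      also have "\<dots> \<le> ennreal (b * (real T / 2)) * emeasure Mp E"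
        using step3 step4 step5 by (intro mult_left_mono) auto
      also have "\<dots> \<le> exp_regret a b A G (two_phase T) T"
        using step1 step2 unfolding exp_regret_def pspace_def Mp_def by simp
      finally show "ennreal (b * (real T / 2) * ((1 - C) * (\<Prod>t. max 0 (1 - L * lt (t + T div 2 + 1)))))
          \<le> exp_regret a b A G (two_phase T) T"
        using gx unfolding Pi_def by simp
    qed
  qed
  show ?thesis
    apply (rule exI[of _ "(1 - C) / 2"])
    using C_lt1 main by auto
qed

end
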